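(* Let $m$ be any nonzero complex number. Then for every positive integer $n$, \begin{align*}&\sum_{k=1}^n\frac{(256m-27)k^3-3(128m+9)k^2+2(88m-3)k-24m}{km^k\binom{4k}k} =6-\frac{3(3n+1)(3n+2)}{m^n\binom{4n}n}, \\&\sum_{k=1}^n\frac{(256m-27)k^3-2(64m+27)k^2-(16m+33)k+8m-6}{(4k+1)m^k\binom{4k}k} =6-\frac{3(n+1)(3n+1)(3n+2)}{(4n+1)m^n\binom{4n}n}, \\&\sum_{k=1}^n\frac{(256m-27)k^3-384mk^2+(176m+3)k-24m}{k(3k-1)m^k\binom{4k}k} =3-\frac{3(3n+1)}{m^n\binom{4n}n}, \\&\sum_{k=1}^n\frac{(256m-27)k^3-3(128m-9)k^2+2(88m-3)k-24m}{k(3k-1)(3k-2)m^k\binom{4k}k} =3-\frac{3}{m^n\binom{4n}n}. \end{align*} Consequently, if $|m|>27/256$, then \begin{align*}\sum_{k=1}^\infty\frac{(256m-27)k^3-3(128m+9)k^2+2(88m-3)k-24m}{km^k\binom{4k}k}&=6, \\\sum_{k=1}^\infty\frac{(256m-27)k^3-2(64m+27)k^2-(16m+33)k+8m-6}{(4k+1)m^k\binom{4k}k}&=6, \\\sum_{k=1}^\infty\frac{(256m-27)k^3-384mk^2+(176m+3)k-24m}{k(3k-1)m^k\binom{4k}k}&=3, \\\sum_{k=1}^\infty\frac{(256m-27)k^3-3(128m-9)k^2+2(88m-3)k-24m}{k(3k-1)(3k-2)m^k\binom{4k}k}&=3. \end{align*} *)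

theory Defs
  imports Complex_Main
begin

end

theory Submission
  imports Defs "HOL-Real_Asymp.Real_Asymp"
begin

lemma binom_rec:
  "(4*Suc n choose Suc n) * ((3*n+3)*(3*n+2)*(3*n+1)) = (4*n choose n) * (8*(4*n+3)*(2*n+1)*(4*n+1))"
proof -
  define X where "X = (4*Suc n choose Suc n)"
  define Y where "Y = (4*n choose n)"
  have a: "fact (Suc n) * fact (4*Suc n - Suc n) * X = (fact (4*Suc n) :: nat)"
    unfolding X_def by (rule binomial_fact_lemma) simp
  have b: "fact n * fact (4*n - n) * Y = (fact (4*n) :: nat)"
    unfolding Y_def by (rule binomial_fact_lemma) simp
  have e1: "4*Suc n - Suc n = Suc (Suc (Suc (3*n)))" by simp
  have e2: "4*n - n = 3*n" by simp
  have e3: "4*Suc n = Suc (Suc (Suc (Suc (4*n))))" by simp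
  have a': "(Suc n * fact n) * ((3*n+3)*(3*n+2)*(3*n+1)*fact (3*n)) * X
     = (4*n+4)*(4*n+3)*(4*n+2)*(4*n+1)*fact (4*n)"
  proof -
    have f3: "fact (Suc(Suc(Suc(3*n)))) = (3*n+3)*(3*n+2)*(3*n+1)*(fact (3*n)::nat)"
      by (simp only: fact_Suc) (simp add: algebra_simps)
    have f4: "fact (Suc(Suc(Suc(Suc(4*n))))) = (4*n+4)*(4*n+3)*(4*n+2)*(4*n+1)*(fact (4*n)::nat)"
      by (simp only: fact_Suc) (simp add: algebra_simps)
    have f1: "fact (Suc n) = Suc n * (fact n :: nat)" by (simp add: fact_Suc)
    show ?thesis using a unfolding e1 unfolding e3 f1 f3 f4 by (simp only: ac_simps)
  qed
  have b': "fact n * fact (3*n) * Y = fact (4*n)" using b e2 by simp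
  have "(fact n * fact (3*n) * Suc n) * (X * ((3*n+3)*(3*n+2)*(3*n+1)))
      = (fact n * fact (3*n) * Suc n) * (Y * (8*(4*n+3)*(2*n+1)*(4*n+1)))"
  proof -
    have "(fact n * fact (3*n) * Suc n) * (X * ((3*n+3)*(3*n+2)*(3*n+1)))
       = (Suc n * fact n) * ((3*n+3)*(3*n+2)*(3*n+1)*fact (3*n)) * X" by (simp add: algebra_simps)
    also have "\<dots> = (4*n+4)*(4*n+3)*(4*n+2)*(4*n+1)*(fact n * fact (3*n) * Y)" using a' b' by simp
    also have "\<dots> = (fact n * fact (3*n) * Suc n) * (Y * (8*(4*n+3)*(2*n+1)*(4*n+1)))" by (simp add: algebra_simps)
    finally show ?thesis .
  qed
  then show ?thesis unfolding X_def Y_def by simp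
qed

lemma binom_rec_of:
  "(of_nat (4*Suc n choose Suc n) :: 'a::comm_semiring_1) * ((3*of_nat n+3)*(3*of_nat n+2)*(3*of_nat n+1))
   = of_nat (4*n choose n) * (8*(4*of_nat n+3)*(2*of_nat n+1)*(4*of_nat n+1))"
  using arg_cong[OF binom_rec[of n], of "of_nat :: nat \<Rightarrow> 'a"]
  by (simp only: of_nat_mult of_nat_add of_nat_numeral of_nat_1)

lemma grat_gen:
  fixes a q C C' A B y :: real
  assumes "a > 0" "q > 0" "C > 0" "C' > 0" "A > 0" "B > 0" "y \<ge> 0" and rec: "C' * B = C * A"
  shows "(y+1+1)^3/((a*q)*C') = (y+1)^3/(q*C) * (((y+2)/(y+1))^3 * B / A) / a"
proof -
  have cc: "C' = C*A/B" using rec assms by (simp add: field_simps)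
  show ?thesis unfolding cc using assms by (simp add: field_simps)
qed

lemma g_lim:
  fixes a :: real assumes a: "a > 27/256"
  shows "(\<lambda>n. (real n+1)^3/(a^n * real (4*n choose n))) \<longlonglongrightarrow> 0"
proof -
  define g where "g = (\<lambda>n. (real n+1)^3/(a^n * real (4*n choose n)))"
  define R where "R = (\<lambda>n::nat. ((real n+2)/(real n+1))^3 * ((3*real n+3)*(3*real n+2)*(3*real n+1)) / (8*(4*real n+3)*(2*real n+1)*(4*real n+1)))"
  have "R \<longlonglongrightarrow> 27/256" unfolding R_def by real_asymp
  define t where "t = (27/256 + a)/2"
  have t1: "27/256 < t" and t2: "t < a" using a by (simp_all add: t_def)
  have a0: "a > 0" using a by simp
  have "eventually (\<lambda>n. R n < t) sequentially"
    using order_tendstoD(2)[OF \<open>R \<longlonglongrightarrow> 27/256\<close> t1] .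
  then obtain N where N: "\<And>n. n \<ge> N \<Longrightarrow> R n < t" by (auto simp: eventually_sequentially)
  have gpos: "g n \<ge> 0" for n unfolding g_def using a0 by simp
  have gs: "g (Suc n) = g n * R n / a" for n
  proof -
    have r: "real (4*Suc n choose Suc n) * ((3*real n+3)*(3*real n+2)*(3*real n+1))
        = real (4*n choose n) * (8*(4*real n+3)*(2*real n+1)*(4*real n+1))"
      by (rule binom_rec_of)
    have "g (Suc n) = (real n+1+1)^3/((a*a^n)*real (4*Suc n choose Suc n))" unfolding g_def by simp
    also have "\<dots> = g n * R n / a" unfolding g_def R_def
      by (rule grat_gen[OF a0 _ _ _ _ _ _ r]) (use a0 in simp_all)
    finally show ?thesis .
  qed
  have "summable g"
  proof (rule summable_ratio_test[where c="t/a" and N=N])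
    show "t/a < 1" using t2 a0 by simp
    fix n assume "n \<ge> N"
    then have "R n \<le> t" using N[of n] by simp
    then have "g n * R n \<le> g n * t" using gpos[of n] by (simp add: mult_left_mono)
    then have "g n * R n / a \<le> t / a * g n" using a0
      by (simp add: divide_right_mono mult.commute)
    then show "norm (g (Suc n)) \<le> t / a * norm (g n)" using gs[of n] gpos[of n] gpos[of "Suc n"] by simp
  qed
  then show ?thesis using summable_LIMSEQ_zero unfolding g_def by blast
qed
lemma gen:
  fixes c c' A B m p E1 E2 D N P1 P2 K :: complex
  assumes cc: "c = c'*B/A" and "A \<noteq> 0" "B \<noteq> 0" "m \<noteq> 0" "p \<noteq> 0" "c' \<noteq> 0" "E1 \<noteq> 0" "D \<noteq> 0" "E2 \<noteq> 0"
    and key: "N/D = m*P1*A/(E1*B) - P2/E2"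
  shows "K - P1/(E1*p*c) + N/(D*(m*p)*c') = K - P2/(E2*(m*p)*c')"
proof -
  have 1: "P1/(E1*p*c) = (m*P1*A/(E1*B))/((m*p)*c')" using assms unfolding cc by (simp add: field_simps)
  have 2: "N/(D*(m*p)*c') = (N/D)/((m*p)*c')" by simp
  have 3: "P2/(E2*(m*p)*c') = (P2/E2)/((m*p)*c')" by simp
  show ?thesis unfolding 1 2 3 key by (simp add: diff_divide_distrib)
qed

lemma keygen:
  fixes N D m P1 A E1 B P2 E2 :: complex
  assumes "D \<noteq> 0" "E1 \<noteq> 0" "B \<noteq> 0" "E2 \<noteq> 0" "N*(E1*B*E2) = (m*P1*A*E2 - P2*(E1*B))*D"
  shows "N/D = m*P1*A/(E1*B) - P2/E2"
  using assms by (simp add: field_simps)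

lemma keys:
  fixes m x :: complex
  assumes n1: "x+1 \<noteq> 0" and n2: "3*x+1 \<noteq> 0" and n3: "3*x+2 \<noteq> 0" and n4: "4*x+1 \<noteq> 0"
   and n5: "4*x+3 \<noteq> 0" and n6: "2*x+1 \<noteq> 0" and n7: "4*x+5 \<noteq> 0" and n8: "3*x+3 \<noteq> 0"
  shows "((256*m-27)*(x+1)^3 - 3*(128*m+9)*(x+1)^2 + 2*(88*m-3)*(x+1) - 24*m) / (x+1)
     = m*(3*(3*x+1)*(3*x+2))*(8*(4*x+3)*(2*x+1)*(4*x+1))/(1*((3*x+3)*(3*x+2)*(3*x+1))) - (3*(3*(x+1)+1)*(3*(x+1)+2))/1"
   and "((256*m-27)*(x+1)^3 - 2*(64*m+27)*(x+1)^2 - (16*m+33)*(x+1) + 8*m - 6) / (4*(x+1)+1)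
     = m*(3*(x+1)*(3*x+1)*(3*x+2))*(8*(4*x+3)*(2*x+1)*(4*x+1))/((4*x+1)*((3*x+3)*(3*x+2)*(3*x+1))) - (3*((x+1)+1)*(3*(x+1)+1)*(3*(x+1)+2))/(4*(x+1)+1)"
   and "((256*m-27)*(x+1)^3 - 384*m*(x+1)^2 + (176*m+3)*(x+1) - 24*m) / ((x+1) * (3*(x+1)-1))
     = m*(3*(3*x+1))*(8*(4*x+3)*(2*x+1)*(4*x+1))/(1*((3*x+3)*(3*x+2)*(3*x+1))) - (3*(3*(x+1)+1))/1"
   and "((256*m-27)*(x+1)^3 - 3*(128*m-9)*(x+1)^2 + 2*(88*m-3)*(x+1) - 24*m) / ((x+1) * (3*(x+1)-1) * (3*(x+1)-2))
     = m*3*(8*(4*x+3)*(2*x+1)*(4*x+1))/(1*((3*x+3)*(3*x+2)*(3*x+1))) - 3/1"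
proof -
  have Bn: "(3*x+3)*(3*x+2)*(3*x+1) \<noteq> 0" by (simp only: mult_eq_0_iff n2 n3 n8 simp_thms)
  have e1: "3*(x+1)-1 = 3*x+2" "3*(x+1)-2 = 3*x+1" "4*(x+1)+1 = 4*x+5" by (simp_all add: algebra_simps)
  have D3: "(x+1) * (3*(x+1)-1) \<noteq> 0" unfolding e1 by (simp only: mult_eq_0_iff n1 n3 simp_thms)
  have D4: "(x+1) * (3*(x+1)-1) * (3*(x+1)-2) \<noteq> 0" unfolding e1 by (simp only: mult_eq_0_iff n1 n2 n3 simp_thms)
  have D2: "4*(x+1)+1 \<noteq> 0" unfolding e1 by (rule n7)
  show "((256*m-27)*(x+1)^3 - 3*(128*m+9)*(x+1)^2 + 2*(88*m-3)*(x+1) - 24*m) / (x+1)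
     = m*(3*(3*x+1)*(3*x+2))*(8*(4*x+3)*(2*x+1)*(4*x+1))/(1*((3*x+3)*(3*x+2)*(3*x+1))) - (3*(3*(x+1)+1)*(3*(x+1)+2))/1"
    by (rule keygen[OF n1 _ Bn]) (simp_all, algebra)
  show "((256*m-27)*(x+1)^3 - 2*(64*m+27)*(x+1)^2 - (16*m+33)*(x+1) + 8*m - 6) / (4*(x+1)+1)
     = m*(3*(x+1)*(3*x+1)*(3*x+2))*(8*(4*x+3)*(2*x+1)*(4*x+1))/((4*x+1)*((3*x+3)*(3*x+2)*(3*x+1))) - (3*((x+1)+1)*(3*(x+1)+1)*(3*(x+1)+2))/(4*(x+1)+1)"
    by (rule keygen[OF D2 n4 Bn D2]) algebra
  show "((256*m-27)*(x+1)^3 - 384*m*(x+1)^2 + (176*m+3)*(x+1) - 24*m) / ((x+1) * (3*(x+1)-1))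
     = m*(3*(3*x+1))*(8*(4*x+3)*(2*x+1)*(4*x+1))/(1*((3*x+3)*(3*x+2)*(3*x+1))) - (3*(3*(x+1)+1))/1"
    by (rule keygen[OF D3 _ Bn]) (simp_all, algebra)
  show "((256*m-27)*(x+1)^3 - 3*(128*m-9)*(x+1)^2 + 2*(88*m-3)*(x+1) - 24*m) / ((x+1) * (3*(x+1)-1) * (3*(x+1)-2))
     = m*3*(8*(4*x+3)*(2*x+1)*(4*x+1))/(1*((3*x+3)*(3*x+2)*(3*x+1))) - 3/1"
    by (rule keygen[OF D4 _ Bn]) (simp_all, algebra)
qed

lemma gen11:
  fixes c c' A B m p D N P1 P2 K :: complex
  assumes cc: "c = c'*B/A" and "A \<noteq> 0" "B \<noteq> 0" "m \<noteq> 0" "p \<noteq> 0" "c' \<noteq> 0" "D \<noteq> 0"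
    and key: "N/D = m*P1*A/(1*B) - P2/1"
  shows "K - P1/(p*c) + N/(D*(m*p)*c') = K - P2/((m*p)*c')"
  using gen[OF assms(1-6), of 1 D 1 N P1 P2 K] assms(7,8) by simp

lemma prep:
  fixes m :: complex and n :: nat
  assumes m: "m \<noteq> 0"
  defines "x \<equiv> (of_nat n :: complex)"
  shows "(of_nat (Suc n) :: complex) = of_nat n + 1" "m^Suc n = m * m^n"
   "(of_nat (4*n choose n)::complex) = of_nat (4*Suc n choose Suc n) * ((3*x+3)*(3*x+2)*(3*x+1)) / (8*(4*x+3)*(2*x+1)*(4*x+1))"
   "8*(4*x+3)*(2*x+1)*(4*x+1) \<noteq> 0" "(3*x+3)*(3*x+2)*(3*x+1) \<noteq> 0"
   "m^n \<noteq> 0" "(of_nat (4*Suc n choose Suc n)::complex) \<noteq> 0"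
   "x+1 \<noteq> 0" "3*x+1 \<noteq> 0" "3*x+2 \<noteq> 0" "4*x+1 \<noteq> 0"
   "4*x+3 \<noteq> 0" "2*x+1 \<noteq> 0" "4*x+5 \<noteq> 0" "3*x+3 \<noteq> 0"
   "(x+1) * (3*(x+1)-1) \<noteq> 0" "(x+1) * (3*(x+1)-1) * (3*(x+1)-2) \<noteq> 0" "4*(x+1)+1 \<noteq> 0"
proof -
  have nz: "of_nat a * x + of_nat b \<noteq> 0" if "b > 0" for a b
  proof -
    have eq: "of_nat a * x + of_nat b = (of_nat (a*n+b) :: complex)" unfolding x_def by simp
    have "a*n+b \<noteq> 0" using that by simp
    then have "(of_nat (a*n+b) :: complex) \<noteq> 0" by (simp only: of_nat_eq_0_iff) simp
    then show ?thesis unfolding eq .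
  qed
  show n1: "x+1 \<noteq> 0" using nz[where a=1 and b=1] by simp
  show n2: "3*x+1 \<noteq> 0" using nz[where a=3 and b=1] by simp
  show n3: "3*x+2 \<noteq> 0" using nz[where a=3 and b=2] by (simp add: numeral_eq_Suc)
  show n4: "4*x+1 \<noteq> 0" using nz[where a=4 and b=1] by simp
  show n5: "4*x+3 \<noteq> 0" using nz[where a=4 and b=3] by simp
  show n6: "2*x+1 \<noteq> 0" using nz[where a=2 and b=1] by simp
  show n7: "4*x+5 \<noteq> 0" using nz[where a=4 and b=5] by simp
  show n8: "3*x+3 \<noteq> 0" using nz[where a=3 and b=3] by simp
  have e1: "3*(x+1)-1 = 3*x+2" "3*(x+1)-2 = 3*x+1" "4*(x+1)+1 = 4*x+5" by (simp_all add: algebra_simps)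
  show "(x+1) * (3*(x+1)-1) \<noteq> 0" unfolding e1 by (simp only: mult_eq_0_iff n1 n3 simp_thms)
  show "(x+1) * (3*(x+1)-1) * (3*(x+1)-2) \<noteq> 0" unfolding e1 by (simp only: mult_eq_0_iff n1 n2 n3 simp_thms)
  show "4*(x+1)+1 \<noteq> 0" unfolding e1 by (rule n7)
  show An: "8*(4*x+3)*(2*x+1)*(4*x+1) \<noteq> 0" by (simp only: mult_eq_0_iff n4 n5 n6 simp_thms) simp
  show "(3*x+3)*(3*x+2)*(3*x+1) \<noteq> 0" by (simp only: mult_eq_0_iff n2 n3 n8 simp_thms)
  show "(of_nat (Suc n) :: complex) = of_nat n + 1" by simp
  show "m^Suc n = m * m^n" by simp
  show "m^n \<noteq> 0" using m by simp
  show "(of_nat (4*Suc n choose Suc n)::complex) \<noteq> 0" by simp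
  show "(of_nat (4*n choose n)::complex) = of_nat (4*Suc n choose Suc n) * ((3*x+3)*(3*x+2)*(3*x+1)) / (8*(4*x+3)*(2*x+1)*(4*x+1))"
    unfolding x_def by (rule eq_divide_imp[OF An[unfolded x_def] binom_rec_of[symmetric]])
qed

lemma tail_lim:
  fixes m :: complex and f :: "nat \<Rightarrow> complex" and P :: "nat \<Rightarrow> real"
  assumes a: "norm m > 27/256" and f: "\<And>n. f n = complex_of_real (P n) / (m^n * of_nat (4*n choose n))"
    and P: "\<And>n. 0 \<le> P n" "\<And>n. P n \<le> 27*(real n+1)^3"
  shows "f \<longlonglongrightarrow> 0"
proof (rule tendsto_0_le[OF g_lim[OF a], where K=27])
  show "\<forall>\<^sub>F n in sequentially. norm (f n) \<le> norm ((real n + 1) ^ 3 / (norm m ^ n * real (4 * n choose n))) * 27"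
  proof (rule always_eventually, rule allI)
    fix n
    have m0: "norm m > 0" using a by linarith
    then have "m \<noteq> 0" by auto
    have D: "norm m ^ n * real (4 * n choose n) > 0" using m0 by simp
    have "norm (f n) = P n / (norm m ^ n * real (4 * n choose n))"
      unfolding f using P(1)[of n] by (simp add: norm_divide norm_mult norm_power)
    also have "\<dots> \<le> 27*(real n+1)^3 / (norm m ^ n * real (4 * n choose n))"
      using D P(2)[of n] by (simp add: divide_right_mono)
    also have "\<dots> = norm ((real n + 1) ^ 3 / (norm m ^ n * real (4 * n choose n))) * 27"
      using D by simp
    finally show "norm (f n) \<le> norm ((real n + 1) ^ 3 / (norm m ^ n * real (4 * n choose n))) * 27" .
  qed
qed

lemma sq_cube: fixes x :: real assumes "x \<ge> 0" shows "(x+1)^2 \<le> (x+1)^3"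
  by (rule power_increasing) (use assms in simp_all)
lemma bnd1: "3*(3*real n+1)*(3*real n+2) \<le> 27*(real n+1)^3"
proof -
  have "3*(3*real n+1)*(3*real n+2) \<le> 27*(real n+1)^2" by (simp add: algebra_simps power2_eq_square)
  also have "\<dots> \<le> 27*(real n+1)^3" using sq_cube[of "real n"] by simp
  finally show ?thesis .
qed
lemma dle: fixes X d :: real assumes "0 \<le> X" "1 \<le> d" shows "X/d \<le> X"
proof -
  have "X*1 \<le> X*d" using assms by (intro mult_left_mono) simp_all
  then show ?thesis using assms by (simp add: divide_le_eq)
qed

lemma bnd2: "3*(real n+1)*(3*real n+1)*(3*real n+2)/(4*real n+1) \<le> 27*(real n+1)^3"
proof -
  have "3*(real n+1)*(3*real n+1)*(3*real n+2)/(4*real n+1) \<le> 3*(real n+1)*(3*real n+1)*(3*real n+2)"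
    by (rule dle) simp_all
  also have "\<dots> \<le> 27*(real n+1)^3" by (simp add: algebra_simps power2_eq_square power3_eq_cube)
  finally show ?thesis .
qed
lemma bnd3: "3*(3*real n+1) \<le> 27*(real n+1)^3"
proof -
  have "3*(3*real n+1) \<le> 27*(real n+1)^1" by simp
  also have "\<dots> \<le> 27*(real n+1)^3" by (simp only: mult_le_cancel_left_pos) (rule power_increasing, simp_all)
  finally show ?thesis .
qed
lemma bnd4: "3 \<le> 27*(real n+1)^3"
proof -
  have "1 \<le> (real n+1)^3" by simp
  then show ?thesis by linarith
qed

definition T1 :: "complex \<Rightarrow> nat \<Rightarrow> complex" where
  "T1 m k = ((256*m-27)*of_nat k^3 - 3*(128*m+9)*of_nat k^2 + 2*(88*m-3)*of_nat k - 24*m) / (of_nat k * m^k * of_nat (4*k choose k))"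

definition Q1 :: "complex \<Rightarrow> nat \<Rightarrow> complex" where
  "Q1 m n = 3*(3*of_nat n+1)*(3*of_nat n+2) / (m^n * of_nat (4*n choose n))"

definition T2 :: "complex \<Rightarrow> nat \<Rightarrow> complex" where
  "T2 m k = ((256*m-27)*of_nat k^3 - 2*(64*m+27)*of_nat k^2 - (16*m+33)*of_nat k + 8*m - 6) / ((4*of_nat k+1) * m^k * of_nat (4*k choose k))"

definition Q2 :: "complex \<Rightarrow> nat \<Rightarrow> complex" where
  "Q2 m n = 3*(of_nat n+1)*(3*of_nat n+1)*(3*of_nat n+2) / ((4*of_nat n+1) * m^n * of_nat (4*n choose n))"

definition T3 :: "complex \<Rightarrow> nat \<Rightarrow> complex" where
  "T3 m k = ((256*m-27)*of_nat k^3 - 384*m*of_nat k^2 + (176*m+3)*of_nat k - 24*m) / (of_nat k * (3*of_nat k-1) * m^k * of_nat (4*k choose k))"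

definition Q3 :: "complex \<Rightarrow> nat \<Rightarrow> complex" where
  "Q3 m n = 3*(3*of_nat n+1) / (m^n * of_nat (4*n choose n))"

definition T4 :: "complex \<Rightarrow> nat \<Rightarrow> complex" where
  "T4 m k = ((256*m-27)*of_nat k^3 - 3*(128*m-9)*of_nat k^2 + 2*(88*m-3)*of_nat k - 24*m) / (of_nat k * (3*of_nat k-1) * (3*of_nat k-2) * m^k * of_nat (4*k choose k))"

definition Q4 :: "complex \<Rightarrow> nat \<Rightarrow> complex" where
  "Q4 m n = 3 / (m^n * of_nat (4*n choose n))"

lemma step1:
  fixes m :: complex assumes m: "m \<noteq> 0"
  shows "(6 - Q1 m n) + T1 m (Suc n) = 6 - Q1 m (Suc n)"
proof -
  note P = prep[OF m, of n]
  show ?thesis unfolding T1_def Q1_def P(1) P(2)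
    by (rule gen11[OF P(3) P(4) P(5) m P(6) P(7)]) (rule keys(1)[OF P(8-15)] P(8))+
qed

lemma sum1:
  fixes m :: complex assumes m: "m \<noteq> 0"
  shows "sum (T1 m) {1..n} = 6 - Q1 m n"
proof (induction n)
  case 0
  then show ?case by (simp add: Q1_def)
next
  case (Suc n)
  have "sum (T1 m) {1..Suc n} = sum (T1 m) {1..n} + T1 m (Suc n)" by simp
  also have "\<dots> = 6 - Q1 m (Suc n)" unfolding Suc.IH by (rule step1[OF m])
  finally show ?case .
qed

lemma tailr1:
  fixes m :: complex
  shows "Q1 m n = complex_of_real (3*(3*real n+1)*(3*real n+2)) / (m^n * of_nat (4*n choose n))"
  unfolding Q1_def by simp

lemma sums1:
  fixes m :: complex assumes m: "m \<noteq> 0" and a: "norm m > 27/256"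
  shows "(\<lambda>j. T1 m (Suc j)) sums 6"
proof -
  have "Q1 m \<longlonglongrightarrow> 0"
    by (rule tail_lim[OF a tailr1 _ bnd1]) simp
  then have L: "(\<lambda>n. 6 - Q1 m n) \<longlonglongrightarrow> 6" using tendsto_diff[OF tendsto_const, of "Q1 m" 0 sequentially "6::complex"] by simp
  have e: "(\<lambda>n. \<Sum>i<n. T1 m (Suc i)) = (\<lambda>n. 6 - Q1 m n)"
    by (rule ext) (simp only: sum1[OF m, symmetric] One_nat_def sum.atLeast1_atMost_eq)
  show ?thesis unfolding sums_def e by (rule L)
qed

lemma step2:
  fixes m :: complex assumes m: "m \<noteq> 0"
  shows "(6 - Q2 m n) + T2 m (Suc n) = 6 - Q2 m (Suc n)"
proof -
  note P = prep[OF m, of n]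
  show ?thesis unfolding T2_def Q2_def P(1) P(2)
    by (rule gen[OF P(3) P(4) P(5) m P(6) P(7)]) (rule keys(2)[OF P(8-15)] P(11) P(18))+
qed

lemma sum2:
  fixes m :: complex assumes m: "m \<noteq> 0"
  shows "sum (T2 m) {1..n} = 6 - Q2 m n"
proof (induction n)
  case 0
  then show ?case by (simp add: Q2_def)
next
  case (Suc n)
  have "sum (T2 m) {1..Suc n} = sum (T2 m) {1..n} + T2 m (Suc n)" by simp
  also have "\<dots> = 6 - Q2 m (Suc n)" unfolding Suc.IH by (rule step2[OF m])
  finally show ?case .
qed

lemma tailr2:
  fixes m :: complex
  shows "Q2 m n = complex_of_real (3*(real n+1)*(3*real n+1)*(3*real n+2)/(4*real n+1)) / (m^n * of_nat (4*n choose n))"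
  unfolding Q2_def by simp

lemma sums2:
  fixes m :: complex assumes m: "m \<noteq> 0" and a: "norm m > 27/256"
  shows "(\<lambda>j. T2 m (Suc j)) sums 6"
proof -
  have "Q2 m \<longlonglongrightarrow> 0"
    by (rule tail_lim[OF a tailr2 _ bnd2]) simp
  then have L: "(\<lambda>n. 6 - Q2 m n) \<longlonglongrightarrow> 6" using tendsto_diff[OF tendsto_const, of "Q2 m" 0 sequentially "6::complex"] by simp
  have e: "(\<lambda>n. \<Sum>i<n. T2 m (Suc i)) = (\<lambda>n. 6 - Q2 m n)"
    by (rule ext) (simp only: sum2[OF m, symmetric] One_nat_def sum.atLeast1_atMost_eq)
  show ?thesis unfolding sums_def e by (rule L)
qed

lemma step3:
  fixes m :: complex assumes m: "m \<noteq> 0"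
  shows "(3 - Q3 m n) + T3 m (Suc n) = 3 - Q3 m (Suc n)"
proof -
  note P = prep[OF m, of n]
  show ?thesis unfolding T3_def Q3_def P(1) P(2)
    by (rule gen11[OF P(3) P(4) P(5) m P(6) P(7)]) (rule keys(3)[OF P(8-15)] P(16))+
qed

lemma sum3:
  fixes m :: complex assumes m: "m \<noteq> 0"
  shows "sum (T3 m) {1..n} = 3 - Q3 m n"
proof (induction n)
  case 0
  then show ?case by (simp add: Q3_def)
next
  case (Suc n)
  have "sum (T3 m) {1..Suc n} = sum (T3 m) {1..n} + T3 m (Suc n)" by simp
  also have "\<dots> = 3 - Q3 m (Suc n)" unfolding Suc.IH by (rule step3[OF m])
  finally show ?case .
qed

lemma tailr3:
  fixes m :: complex
  shows "Q3 m n = complex_of_real (3*(3*real n+1)) / (m^n * of_nat (4*n choose n))"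
  unfolding Q3_def by simp

lemma sums3:
  fixes m :: complex assumes m: "m \<noteq> 0" and a: "norm m > 27/256"
  shows "(\<lambda>j. T3 m (Suc j)) sums 3"
proof -
  have "Q3 m \<longlonglongrightarrow> 0"
    by (rule tail_lim[OF a tailr3 _ bnd3]) simp
  then have L: "(\<lambda>n. 3 - Q3 m n) \<longlonglongrightarrow> 3" using tendsto_diff[OF tendsto_const, of "Q3 m" 0 sequentially "3::complex"] by simp
  have e: "(\<lambda>n. \<Sum>i<n. T3 m (Suc i)) = (\<lambda>n. 3 - Q3 m n)"
    by (rule ext) (simp only: sum3[OF m, symmetric] One_nat_def sum.atLeast1_atMost_eq)
  show ?thesis unfolding sums_def e by (rule L)
qed

lemma step4:
  fixes m :: complex assumes m: "m \<noteq> 0"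
  shows "(3 - Q4 m n) + T4 m (Suc n) = 3 - Q4 m (Suc n)"
proof -
  note P = prep[OF m, of n]
  show ?thesis unfolding T4_def Q4_def P(1) P(2)
    by (rule gen11[OF P(3) P(4) P(5) m P(6) P(7)]) (rule keys(4)[OF P(8-15)] P(17))+
qed

lemma sum4:
  fixes m :: complex assumes m: "m \<noteq> 0"
  shows "sum (T4 m) {1..n} = 3 - Q4 m n"
proof (induction n)
  case 0
  then show ?case by (simp add: Q4_def)
next
  case (Suc n)
  have "sum (T4 m) {1..Suc n} = sum (T4 m) {1..n} + T4 m (Suc n)" by simp
  also have "\<dots> = 3 - Q4 m (Suc n)" unfolding Suc.IH by (rule step4[OF m])
  finally show ?case .
qed

lemma tailr4:
  fixes m :: complex
  shows "Q4 m n = complex_of_real (3) / (m^n * of_nat (4*n choose n))"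
  unfolding Q4_def by simp

lemma sums4:
  fixes m :: complex assumes m: "m \<noteq> 0" and a: "norm m > 27/256"
  shows "(\<lambda>j. T4 m (Suc j)) sums 3"
proof -
  have "Q4 m \<longlonglongrightarrow> 0"
    by (rule tail_lim[OF a tailr4 _ bnd4]) simp
  then have L: "(\<lambda>n. 3 - Q4 m n) \<longlonglongrightarrow> 3" using tendsto_diff[OF tendsto_const, of "Q4 m" 0 sequentially "3::complex"] by simp
  have e: "(\<lambda>n. \<Sum>i<n. T4 m (Suc i)) = (\<lambda>n. 3 - Q4 m n)"
    by (rule ext) (simp only: sum4[OF m, symmetric] One_nat_def sum.atLeast1_atMost_eq)
  show ?thesis unfolding sums_def e by (rule L)
qed

theorem lemma2p1:
  fixes m :: complex
  assumes "m \<noteq> 0"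
  shows "(\<forall>n::nat. n \<ge> 1 \<longrightarrow>
     (\<Sum>k=1..n. ((256*m-27)*of_nat k^3 - 3*(128*m+9)*of_nat k^2 + 2*(88*m-3)*of_nat k - 24*m)
          / (of_nat k * m^k * of_nat (4*k choose k)))
       = 6 - 3*(3*of_nat n+1)*(3*of_nat n+2) / (m^n * of_nat (4*n choose n))
   \<and> (\<Sum>k=1..n. ((256*m-27)*of_nat k^3 - 2*(64*m+27)*of_nat k^2 - (16*m+33)*of_nat k + 8*m - 6)
          / ((4*of_nat k+1) * m^k * of_nat (4*k choose k)))
       = 6 - 3*(of_nat n+1)*(3*of_nat n+1)*(3*of_nat n+2) / ((4*of_nat n+1) * m^n * of_nat (4*n choose n))
   \<and> (\<Sum>k=1..n. ((256*m-27)*of_nat k^3 - 384*m*of_nat k^2 + (176*m+3)*of_nat k - 24*m)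
          / (of_nat k * (3*of_nat k-1) * m^k * of_nat (4*k choose k)))
       = 3 - 3*(3*of_nat n+1) / (m^n * of_nat (4*n choose n))
   \<and> (\<Sum>k=1..n. ((256*m-27)*of_nat k^3 - 3*(128*m-9)*of_nat k^2 + 2*(88*m-3)*of_nat k - 24*m)
          / (of_nat k * (3*of_nat k-1) * (3*of_nat k-2) * m^k * of_nat (4*k choose k)))
       = 3 - 3 / (m^n * of_nat (4*n choose n)))
  \<and> (norm m > 27/256 \<longrightarrow>
     (\<lambda>j. let k = Suc j in ((256*m-27)*of_nat k^3 - 3*(128*m+9)*of_nat k^2 + 2*(88*m-3)*of_nat k - 24*m)
          / (of_nat k * m^k * of_nat (4*k choose k))) sums 6
   \<and> (\<lambda>j. let k = Suc j in ((256*m-27)*of_nat k^3 - 2*(64*m+27)*of_nat k^2 - (16*m+33)*of_nat k + 8*m - 6)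
          / ((4*of_nat k+1) * m^k * of_nat (4*k choose k))) sums 6
   \<and> (\<lambda>j. let k = Suc j in ((256*m-27)*of_nat k^3 - 384*m*of_nat k^2 + (176*m+3)*of_nat k - 24*m)
          / (of_nat k * (3*of_nat k-1) * m^k * of_nat (4*k choose k))) sums 3
   \<and> (\<lambda>j. let k = Suc j in ((256*m-27)*of_nat k^3 - 3*(128*m-9)*of_nat k^2 + 2*(88*m-3)*of_nat k - 24*m)
          / (of_nat k * (3*of_nat k-1) * (3*of_nat k-2) * m^k * of_nat (4*k choose k))) sums 3)"
proof -
  have A: "\<forall>n::nat. n \<ge> 1 \<longrightarrow>
     (\<Sum>k=1..n. T1 m k) = 6 - Q1 m n \<and> (\<Sum>k=1..n. T2 m k) = 6 - Q2 m n
   \<and> (\<Sum>k=1..n. T3 m k) = 3 - Q3 m n \<and> (\<Sum>k=1..n. T4 m k) = 3 - Q4 m n"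
    using sum1[OF assms] sum2[OF assms] sum3[OF assms] sum4[OF assms] by blast
  have B: "norm m > 27/256 \<longrightarrow> (\<lambda>j. let k = Suc j in T1 m k) sums 6 \<and> (\<lambda>j. let k = Suc j in T2 m k) sums 6
     \<and> (\<lambda>j. let k = Suc j in T3 m k) sums 3 \<and> (\<lambda>j. let k = Suc j in T4 m k) sums 3"
    using sums1[OF assms] sums2[OF assms] sums3[OF assms] sums4[OF assms] by (simp add: Let_def)
  show ?thesis using A B unfolding T1_def T2_def T3_def T4_def Q1_def Q2_def Q3_def Q4_def by (rule conjI)
qed

end
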